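(* In the binary noisy-label setting described in the context, if $e_+,e_-<0.5$, then for all $y,y'\in\{-1,+1\}$, $$\left|\frac{\tilde P(y,y')}{\tilde Q(y,y')}-1\right|=O\big(1-e_+-e_-\big).$$
   Context: $(X,Y)$ with $X\in\mathcal X$, $Y\in\{-1,+1\}$; noisy label $\tilde Y$ generated from $Y$, conditionally independently of $X$ given $Y$, with $e_+={\mathbb P}(\tilde Y=-1\mid Y=+1)$, $e_-={\mathbb P}(\tilde Y=+1\mid Y=-1)$, $e_++e_-<1$. $h:\mathcal X\to\{-1,+1\}$ is a classifier, $\tilde P(y,y')={\mathbb P}(h(X)=y,\tilde Y=y')$ and $\tilde Q(y,y')={\mathbb P}(h(X)=y)\,{\mathbb P}(\tilde Y=y')$. The $O(\cdot)$ is with respect to the noise rates $e_+,e_-$, with $h$ and the distribution of $(X,Y)$ fixed. *)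

theory Defs
  imports "HOL-Probability.Probability"
begin

text \<open>The noisy label is generated from Y conditionally independently of X given Y, with
  flip rates ep = P(Yt = -1 | Y = +1) and em = P(Yt = +1 | Y = -1):
  for every measurable A, P(X in A, Y = y, Yt = y') = P(X in A, Y = y) * P(Yt = y' | Y = y).\<close>

definition noisy_label_model ::
  "'b measure \<Rightarrow> 'a measure \<Rightarrow> ('a \<times> int) measure \<Rightarrow> ('b \<Rightarrow> 'a) \<Rightarrow> ('b \<Rightarrow> int)
    \<Rightarrow> ('b \<Rightarrow> int) \<Rightarrow> real \<Rightarrow> real \<Rightarrow> bool" where
  "noisy_label_model M S D X Y Yt ep em \<longleftrightarrow>
     prob_space M \<and>
     X \<in> measurable M S \<and>
     Y \<in> measurable M (count_space UNIV) \<and>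
     Yt \<in> measurable M (count_space UNIV) \<and>
     distr M (S \<Otimes>\<^sub>M count_space UNIV) (\<lambda>\<omega>. (X \<omega>, Y \<omega>)) = D \<and>
     (\<forall>\<omega>\<in>space M. Y \<omega> \<in> {-1, 1} \<and> Yt \<omega> \<in> {-1, 1}) \<and>
     (\<forall>A\<in>sets S.
        measure M {\<omega>\<in>space M. X \<omega> \<in> A \<and> Y \<omega> = 1 \<and> Yt \<omega> = -1}
          = ep * measure M {\<omega>\<in>space M. X \<omega> \<in> A \<and> Y \<omega> = 1} \<and>
        measure M {\<omega>\<in>space M. X \<omega> \<in> A \<and> Y \<omega> = 1 \<and> Yt \<omega> = 1}
          = (1 - ep) * measure M {\<omega>\<in>space M. X \<omega> \<in> A \<and> Y \<omega> = 1} \<and>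
        measure M {\<omega>\<in>space M. X \<omega> \<in> A \<and> Y \<omega> = -1 \<and> Yt \<omega> = 1}
          = em * measure M {\<omega>\<in>space M. X \<omega> \<in> A \<and> Y \<omega> = -1} \<and>
        measure M {\<omega>\<in>space M. X \<omega> \<in> A \<and> Y \<omega> = -1 \<and> Yt \<omega> = -1}
          = (1 - em) * measure M {\<omega>\<in>space M. X \<omega> \<in> A \<and> Y \<omega> = -1})"

definition Ptilde :: "'b measure \<Rightarrow> ('b \<Rightarrow> 'a) \<Rightarrow> ('b \<Rightarrow> int) \<Rightarrow> ('a \<Rightarrow> int) \<Rightarrow> int \<Rightarrow> int \<Rightarrow> real" where
  "Ptilde M X Yt h y y' = measure M {\<omega>\<in>space M. h (X \<omega>) = y \<and> Yt \<omega> = y'}"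

definition Qtilde :: "'b measure \<Rightarrow> ('b \<Rightarrow> 'a) \<Rightarrow> ('b \<Rightarrow> int) \<Rightarrow> ('a \<Rightarrow> int) \<Rightarrow> int \<Rightarrow> int \<Rightarrow> real" where
  "Qtilde M X Yt h y y' =
     measure M {\<omega>\<in>space M. h (X \<omega>) = y} * measure M {\<omega>\<in>space M. Yt \<omega> = y'}"

end

theory Submission
  imports Defs
begin

lemma core:
  fixes a b p q ep em :: real
  assumes "0 \<le> ep" "ep < 1/2" "0 \<le> em" "em < 1/2" "p + q = 1" "0 \<le> a" "a \<le> p" "0 \<le> b" "b \<le> q"
    and "(a+b)*((1-ep)*p+em*q) \<noteq> 0"
  shows "\<bar>((1-ep)*a+em*b)/((a+b)*((1-ep)*p+em*q)) - 1\<bar> \<le> 2/(p*q)*(1-ep-em)"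
proof -
  define T where "T = (1-ep)*p+em*q"
  have p0: "p \<ge> 0" "q \<ge> 0" using assms by linarith+
  have t1: "(1-ep)*p \<ge> (1/2)*p" using assms p0 by (intro mult_right_mono) auto
  have t2: "em*q \<ge> 0" using assms p0 by simp
  have Tge: "T \<ge> p/2" unfolding T_def using t1 t2 by linarith
  have Tne: "T \<noteq> 0" "a+b \<noteq> 0" using assms(10) unfolding T_def by auto
  have Tpos: "T > 0" using Tge Tne p0 by linarith
  have ab: "a+b > 0" using Tne assms by linarith
  have num: "(1-ep)*a+em*b - (a+b)*T = (1-ep-em)*(a*q-b*p)"
    proof - have qq: "q = 1 - p" using assms(5) by simp show ?thesis unfolding T_def qq by (simp add: algebra_simps) qed
  have eq: "((1-ep)*a+em*b)/((a+b)*T) - 1 = (1-ep-em)*(a*q-b*p)/((a+b)*T)"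
  proof -
    have "(a+b)*T > 0" using ab Tpos by simp
    then have "((1-ep)*a+em*b)/((a+b)*T) - 1 = ((1-ep)*a+em*b - (a+b)*T)/((a+b)*T)"
      using Tne by (simp add: diff_divide_distrib)
    then show ?thesis by (simp only: num)
  qed
  have k: "0 \<le> 1-ep-em" using assms by simp
  show ?thesis
  proof (cases "p*q = 0")
    case True
    then have "p = 0 \<or> q = 0" by simp
    then have "a*q-b*p = 0" using assms by auto
    then have z1: "\<bar>(1-ep-em)*(a*q-b*p)/((a+b)*T)\<bar> = 0" by simp
    have z2: "2/(p*q) = 0" using True by simp
    show ?thesis unfolding T_def[symmetric] eq z1 z2 by simp
  next
    case False
    then have pq: "p > 0" "q > 0" using p0 by (auto simp: less_le)
    have pq1: "p \<le> 1" "q \<le> 1" using assms p0 by linarith+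
    have "a*q \<le> a" "b*p \<le> b" using pq1 assms by (auto intro: mult_left_le)
    moreover have "a*q \<ge> 0" "b*p \<ge> 0" using pq assms by auto
    ultimately have h1: "\<bar>a*q-b*p\<bar> \<le> a+b" by linarith
    have "\<bar>a*q-b*p\<bar> * (p*q) \<le> (a+b)*(p*q)" using h1 pq by (intro mult_right_mono) auto
    also have "\<dots> \<le> (a+b)*p" using ab pq pq1 by (intro mult_left_mono) (auto intro: mult_left_le)
    also have "\<dots> \<le> (a+b)*(2*T)" using Tge ab by (intro mult_left_mono) auto
    also have "\<dots> = 2*((a+b)*T)" by simp
    finally have X: "\<bar>a*q-b*p\<bar> * (p*q) \<le> 2*((a+b)*T)" .
    have Z: "(a+b)*T > 0" "p*q > 0" using pq ab Tpos by auto
    have "\<bar>a*q-b*p\<bar> \<le> 2*((a+b)*T) / (p*q)" using X Z by (simp add: pos_le_divide_eq)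
    then have "\<bar>a*q-b*p\<bar> \<le> 2/(p*q) * ((a+b)*T)" by simp
    then have "\<bar>a*q-b*p\<bar> / ((a+b)*T) \<le> 2/(p*q)"
      using Z by (simp add: pos_divide_le_eq del: times_divide_eq_left)
    then have "(1-ep-em)*(\<bar>a*q-b*p\<bar> / ((a+b)*T)) \<le> (1-ep-em)*(2/(p*q))"
      using k by (rule mult_left_mono)
    then show ?thesis unfolding T_def[symmetric] eq using k ab Tpos
      by (simp add: abs_mult abs_div mult.commute)
  qed
qed

lemma split2:
  assumes "finite_measure M" "{\<omega>\<in>space M. P \<omega>} \<in> sets M" "{\<omega>\<in>space M. Q \<omega>} \<in> sets M"
    "\<forall>\<omega>\<in>space M. R \<omega> \<longleftrightarrow> P \<omega> \<or> Q \<omega>" "\<forall>\<omega>\<in>space M. \<not>(P \<omega> \<and> Q \<omega>)"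
  shows "measure M {\<omega>\<in>space M. R \<omega>} = measure M {\<omega>\<in>space M. P \<omega>} + measure M {\<omega>\<in>space M. Q \<omega>}"
proof -
  interpret finite_measure M by fact
  have "{\<omega>\<in>space M. R \<omega>} = {\<omega>\<in>space M. P \<omega>} \<union> {\<omega>\<in>space M. Q \<omega>}" using assms(4) by auto
  then show ?thesis using assms(2,3,5) by (auto intro!: finite_measure_Union)
qed

theorem proposition1:
  fixes S :: "'a measure" and D :: "('a \<times> int) measure" and h :: "'a \<Rightarrow> int"
  assumes "h \<in> measurable S (count_space UNIV)"
    and "\<forall>x. h x \<in> {-1, 1}"
  shows "\<exists>C::real. \<forall>(M::'b measure) X Y Yt ep em.
           noisy_label_model M S D X Y Yt ep em \<and> 0 \<le> ep \<and> ep < 1/2 \<and> 0 \<le> em \<and> em < 1/2 \<longrightarrow>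
           (\<forall>y\<in>{-1, 1}. \<forall>y'\<in>{-1, 1}. Qtilde M X Yt h y y' \<noteq> 0 \<longrightarrow>
              \<bar>Ptilde M X Yt h y y' / Qtilde M X Yt h y y' - 1\<bar> \<le> C * (1 - ep - em))"
proof -
  define pD where "pD = measure D (space S \<times> {1})"
  show ?thesis
  proof (intro exI[of _ "2/(pD*(1-pD))"] allI impI ballI)
    fix M :: "'b measure" and X Y Yt ep em y y'
    assume H: "noisy_label_model M S D X Y Yt ep em \<and> 0 \<le> ep \<and> ep < 1/2 \<and> 0 \<le> em \<and> em < 1/2"
      and y: "y \<in> {-1, 1::int}" and y': "y' \<in> {-1, 1::int}" and Q0: "Qtilde M X Yt h y y' \<noteq> 0"
    have ps: "prob_space M" and mX[measurable]: "X \<in> measurable M S"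
      and mY[measurable]: "Y \<in> measurable M (count_space UNIV)"
      and mYt[measurable]: "Yt \<in> measurable M (count_space UNIV)"
      and dist: "distr M (S \<Otimes>\<^sub>M count_space UNIV) (\<lambda>\<omega>. (X \<omega>, Y \<omega>)) = D"
      and vals: "\<forall>\<omega>\<in>space M. Y \<omega> \<in> {-1, 1} \<and> Yt \<omega> \<in> {-1, 1}"
      and noise: "\<forall>A\<in>sets S.
        measure M {\<omega>\<in>space M. X \<omega> \<in> A \<and> Y \<omega> = 1 \<and> Yt \<omega> = -1}
          = ep * measure M {\<omega>\<in>space M. X \<omega> \<in> A \<and> Y \<omega> = 1} \<and>
        measure M {\<omega>\<in>space M. X \<omega> \<in> A \<and> Y \<omega> = 1 \<and> Yt \<omega> = 1}
          = (1 - ep) * measure M {\<omega>\<in>space M. X \<omega> \<in> A \<and> Y \<omega> = 1} \<and>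
        measure M {\<omega>\<in>space M. X \<omega> \<in> A \<and> Y \<omega> = -1 \<and> Yt \<omega> = 1}
          = em * measure M {\<omega>\<in>space M. X \<omega> \<in> A \<and> Y \<omega> = -1} \<and>
        measure M {\<omega>\<in>space M. X \<omega> \<in> A \<and> Y \<omega> = -1 \<and> Yt \<omega> = -1}
          = (1 - em) * measure M {\<omega>\<in>space M. X \<omega> \<in> A \<and> Y \<omega> = -1}"
      using H unfolding noisy_label_model_def by blast+
    have e: "0 \<le> ep" "ep < 1/2" "0 \<le> em" "em < 1/2" using H by auto
    interpret prob_space M by (rule ps)
    have fm: "finite_measure M" by unfold_locales
    note [measurable] = assms(1)
    have Xs: "\<And>\<omega>. \<omega> \<in> space M \<Longrightarrow> X \<omega> \<in> space S" using measurable_space[OF mX] .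
    define A where "A = h -` {y} \<inter> space S"
    have A[measurable]: "A \<in> sets S" unfolding A_def using assms(1) by (rule measurable_sets) simp
    have SS[measurable]: "space S \<in> sets S" by simp
    define a where "a = measure M {\<omega>\<in>space M. X \<omega> \<in> A \<and> Y \<omega> = 1}"
    define b where "b = measure M {\<omega>\<in>space M. X \<omega> \<in> A \<and> Y \<omega> = -1}"
    define p where "p = measure M {\<omega>\<in>space M. X \<omega> \<in> space S \<and> Y \<omega> = 1}"
    define q where "q = measure M {\<omega>\<in>space M. X \<omega> \<in> space S \<and> Y \<omega> = -1}"
    have pq1: "p + q = 1"
    proof -
      have "measure M {\<omega>\<in>space M. True} = p + q" unfolding p_def q_def
        by (rule split2[OF fm]) (use vals Xs in \<open>measurable, measurable, auto\<close>)
      moreover have "{\<omega>\<in>space M. True} = space M" by simp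
      ultimately show ?thesis using prob_space by simp
    qed
    note n1 = noise[rule_format, OF A] and n2 = noise[rule_format, OF SS]
    have Ph: "measure M {\<omega>\<in>space M. h (X \<omega>) = y} = a + b" unfolding a_def b_def
      by (rule split2[OF fm]) (use vals Xs in \<open>measurable, measurable, auto simp: A_def\<close>)
    have Pt1: "Ptilde M X Yt h y 1 = (1-ep)*a + em*b"
    proof -
      have "Ptilde M X Yt h y 1 = measure M {\<omega>\<in>space M. X \<omega> \<in> A \<and> Y \<omega> = 1 \<and> Yt \<omega> = 1}
         + measure M {\<omega>\<in>space M. X \<omega> \<in> A \<and> Y \<omega> = -1 \<and> Yt \<omega> = 1}" unfolding Ptilde_def
        by (rule split2[OF fm]) (use vals Xs in \<open>measurable, measurable, auto simp: A_def\<close>)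
      then show ?thesis using n1 unfolding a_def b_def by simp
    qed
    have Ptm: "Ptilde M X Yt h y (-1) = ep*a + (1-em)*b"
    proof -
      have "Ptilde M X Yt h y (-1) = measure M {\<omega>\<in>space M. X \<omega> \<in> A \<and> Y \<omega> = 1 \<and> Yt \<omega> = -1}
         + measure M {\<omega>\<in>space M. X \<omega> \<in> A \<and> Y \<omega> = -1 \<and> Yt \<omega> = -1}" unfolding Ptilde_def
        by (rule split2[OF fm]) (use vals Xs in \<open>measurable, measurable, auto simp: A_def\<close>)
      then show ?thesis using n1 unfolding a_def b_def by simp
    qed
    have T1: "measure M {\<omega>\<in>space M. Yt \<omega> = 1} = (1-ep)*p + em*q"
    proof -
      have "measure M {\<omega>\<in>space M. Yt \<omega> = 1} = measure M {\<omega>\<in>space M. X \<omega> \<in> space S \<and> Y \<omega> = 1 \<and> Yt \<omega> = 1}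
         + measure M {\<omega>\<in>space M. X \<omega> \<in> space S \<and> Y \<omega> = -1 \<and> Yt \<omega> = 1}"
        by (rule split2[OF fm]) (use vals Xs in \<open>measurable, measurable, auto\<close>)
      then show ?thesis using n2 unfolding p_def q_def by simp
    qed
    have Tm: "measure M {\<omega>\<in>space M. Yt \<omega> = -1} = ep*p + (1-em)*q"
    proof -
      have "measure M {\<omega>\<in>space M. Yt \<omega> = -1} = measure M {\<omega>\<in>space M. X \<omega> \<in> space S \<and> Y \<omega> = 1 \<and> Yt \<omega> = -1}
         + measure M {\<omega>\<in>space M. X \<omega> \<in> space S \<and> Y \<omega> = -1 \<and> Yt \<omega> = -1}"
        by (rule split2[OF fm]) (use vals Xs in \<open>measurable, measurable, auto\<close>)
      then show ?thesis using n2 unfolding p_def q_def by simp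
    qed
    have ap: "a \<le> p" unfolding a_def p_def
      by (rule finite_measure_mono) (auto simp: A_def)
    have bq: "b \<le> q" unfolding b_def q_def
      by (rule finite_measure_mono) (auto simp: A_def)
    have a0: "0 \<le> a" "0 \<le> b" unfolding a_def b_def by simp_all
    have ppD: "p = pD"
    proof -
      have f: "(\<lambda>\<omega>. (X \<omega>, Y \<omega>)) \<in> measurable M (S \<Otimes>\<^sub>M count_space UNIV)" by measurable
      have st: "space S \<times> {1} \<in> sets (S \<Otimes>\<^sub>M count_space UNIV)" by (rule pair_measureI) auto
      have "pD = measure M ((\<lambda>\<omega>. (X \<omega>, Y \<omega>)) -` (space S \<times> {1}) \<inter> space M)"
        unfolding pD_def dist[symmetric] by (rule measure_distr[OF f st])
      also have "(\<lambda>\<omega>. (X \<omega>, Y \<omega>)) -` (space S \<times> {1}) \<inter> space M = {\<omega>\<in>space M. X \<omega> \<in> space S \<and> Y \<omega> = 1}"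
        by auto
      finally show ?thesis unfolding p_def by simp
    qed
    have qpD: "q = 1 - pD" using pq1 ppD by simp
    have pqD: "2/(pD*(1-pD)) = 2/(p*q)" using ppD qpD by simp
    show "\<bar>Ptilde M X Yt h y y' / Qtilde M X Yt h y y' - 1\<bar> \<le> 2/(pD*(1-pD)) * (1 - ep - em)"
    proof (cases "y' = 1")
      case True
      have Qe: "Qtilde M X Yt h y y' = (a+b)*((1-ep)*p+em*q)" unfolding Qtilde_def True Ph T1 ..
      have Pe: "Ptilde M X Yt h y y' = (1-ep)*a+em*b" unfolding True Pt1 by simp
      have "\<bar>((1-ep)*a+em*b)/((a+b)*((1-ep)*p+em*q)) - 1\<bar> \<le> 2/(p*q)*(1-ep-em)"
        using Q0 unfolding Qe by (intro core) (use e pq1 ap bq a0 in auto)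
      then show ?thesis unfolding pqD Pe Qe .
    next
      case False
      then have F: "y' = -1" using y' by simp
      have Qe: "Qtilde M X Yt h y y' = (b+a)*((1-em)*q+ep*p)" unfolding Qtilde_def F Ph Tm
        by (simp add: algebra_simps)
      have Pe: "Ptilde M X Yt h y y' = (1-em)*b+ep*a" unfolding F Ptm by simp
      have "\<bar>((1-em)*b+ep*a)/((b+a)*((1-em)*q+ep*p)) - 1\<bar> \<le> 2/(q*p)*(1-em-ep)"
        using Q0 unfolding Qe by (intro core) (use e pq1 ap bq a0 in auto)
      then show ?thesis unfolding pqD Pe Qe by (simp add: mult.commute algebra_simps)
    qed
  qed
qed
end
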